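(* Let $r \geq 2$ and let $D=\{d_1<d_2<d_3<\dotsb\}$ be an infinite set of positive integers. If there exist a real number $\delta>0$ and a positive integer $N$ such that $$d_{n+1} \geq \left(2+\frac{1}{r-1}+\delta\right)d_n \quad\text{for all } n \geq N,$$ then $D$ is not $r$-accessible; that is, $\operatorname{doa}(D) \leq r-1$.
   Context: An $r$-coloring of a set $A$ is a function $\chi:A\to\{1,\dots,r\}$. For $D\subseteq\mathbb{N}=\{1,2,3,\dots\}$, a $k$-term $D$-diffsequence is a sequence of integers $x_1,\dots,x_k$ with $x_{i+1}-x_i\in D$ for all $1\le i\le k-1$. A set $D\subseteq\mathbb{N}$ is $r$-accessible if for every $r$-coloring of $\mathbb{N}$ and every $k\ge1$ there is a monochromatic $k$-term $D$-diffsequence in $\mathbb{N}$. The degree of accessibility $\operatorname{doa}(D)$ is the greatest positive integer $r$ for which $D$ is $r$-accessible ($\operatorname{doa}(D)=\infty$ if $D$ is $r$-accessible for all $r$). *)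

theory Defs
  imports "HOL-Analysis.Analysis" "HOL-Library.Infinite_Set"
begin

text \<open>A k-term D-diffsequence x_1,...,x_k in the positive integers, indexed here by
  i < k (x 0, ..., x (k-1)).\<close>
definition diffseq :: "nat set \<Rightarrow> nat \<Rightarrow> (nat \<Rightarrow> nat) \<Rightarrow> bool" where
  "diffseq D k x \<longleftrightarrow> (\<forall>i<k. x i \<ge> 1) \<and>
     (\<forall>i. i + 1 < k \<longrightarrow> x (i + 1) > x i \<and> x (i + 1) - x i \<in> D)"

definition r_coloring :: "nat \<Rightarrow> (nat \<Rightarrow> nat) \<Rightarrow> bool" where
  "r_coloring r chi \<longleftrightarrow> (\<forall>x\<ge>1. chi x \<in> {1..r})"

definition r_accessible :: "nat \<Rightarrow> nat set \<Rightarrow> bool" where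
  "r_accessible r D \<longleftrightarrow>
     (\<forall>chi. r_coloring r chi \<longrightarrow>
        (\<forall>k\<ge>1. \<exists>x. diffseq D k x \<and> (\<forall>i<k. \<forall>j<k. chi (x i) = chi (x j))))"

end

theory Submission
  imports Defs
begin

primrec gseq :: "(nat \<Rightarrow> real) \<Rightarrow> real \<Rightarrow> real \<Rightarrow> nat \<Rightarrow> real" where
  "gseq e a A 0 = (of_int \<lceil>A * e 0 - a\<rceil> + a) / e 0"
| "gseq e a A (Suc m) = (of_int \<lceil>gseq e a A m * e (Suc m) - a\<rceil> + a) / e (Suc m)"

lemma step_bounds:
  fixes E l a :: real
  assumes "E > 0"
  shows "l \<le> (of_int \<lceil>l * E - a\<rceil> + a) / E"
    and "(of_int \<lceil>l * E - a\<rceil> + a) / E \<le> l + 1 / E"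
proof -
  have c1: "l * E - a \<le> of_int \<lceil>l * E - a\<rceil>" by (rule le_of_int_ceiling)
  have c2: "of_int \<lceil>l * E - a\<rceil> < l * E - a + 1" using ceiling_correct[of "l * E - a"] by linarith
  show "l \<le> (of_int \<lceil>l * E - a\<rceil> + a) / E"
    unfolding pos_le_divide_eq[OF assms] using c1 by linarith
  show "(of_int \<lceil>l * E - a\<rceil> + a) / E \<le> l + 1 / E"
  proof -
    have "(of_int \<lceil>l * E - a\<rceil> + a) / E \<le> (l * E + 1) / E"
      by (rule divide_right_mono) (use c2 assms in linarith)+
    also have "(l * E + 1) / E = l + 1 / E" using assms by (simp add: field_simps)
    finally show ?thesis .
  qed
qed

lemma nested:
  fixes e :: "nat \<Rightarrow> real" and a L A B :: real
  assumes epos: "\<And>m. e m > 0"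
    and egrow: "\<And>m. (1 + L) * e m \<le> L * e (Suc m)"
    and L: "L \<ge> 0"
    and base: "1 + L \<le> e 0 * (B - A)"
  shows "\<exists>\<alpha>. A \<le> \<alpha> \<and> \<alpha> \<le> B \<and>
     (\<forall>m. \<exists>K::int. of_int K + a \<le> \<alpha> * e m \<and> \<alpha> * e m \<le> of_int K + a + L)"
proof -
  define g where "g = gseq e a A"
  define u where "u = (\<lambda>m. g m + L / e m)"
  have g0: "A \<le> g 0" "g 0 \<le> A + 1 / e 0"
    using step_bounds[OF epos[of 0], of A a] by (simp_all add: g_def)
  have gS: "g m \<le> g (Suc m)" "g (Suc m) \<le> g m + 1 / e (Suc m)" for m
    using step_bounds[OF epos[of "Suc m"], of "g m" a] by (simp_all add: g_def)
  have u0: "u 0 \<le> B"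
  proof -
    have "u 0 \<le> A + (1 + L) / e 0" using g0 by (simp add: u_def add_divide_distrib)
    also have "(1 + L) / e 0 \<le> B - A" using base epos[of 0] by (simp add: divide_simps mult.commute)
    finally show ?thesis by simp
  qed
  have uS: "u (Suc m) \<le> u m" for m
  proof -
    have "u (Suc m) \<le> g m + (1 + L) / e (Suc m)" using gS[of m] by (simp add: u_def add_divide_distrib)
    also have "(1 + L) / e (Suc m) \<le> L / e m"
      using egrow[of m] epos[of m] epos[of "Suc m"] by (simp add: divide_simps mult.commute)
    finally show ?thesis by (simp add: u_def)
  qed
  have ginc: "incseq g" by (rule incseq_SucI) (use gS in auto)
  have udec: "decseq u" by (rule decseq_SucI) (use uS in auto)
  have gu: "g m \<le> u m" for m using L epos[of m] by (simp add: u_def)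
  have gle: "g m \<le> u j" for m j
  proof (cases "m \<le> j")
    case True
    then have "g m \<le> g j" using ginc by (simp add: incseq_def)
    then show ?thesis using gu[of j] by linarith
  next
    case False
    then have "u m \<le> u j" using udec by (simp add: decseq_def)
    then show ?thesis using gu[of m] by linarith
  qed
  define \<alpha> where "\<alpha> = Sup (range g)"
  have bdd: "bdd_above (range g)" using gle by (auto intro: bdd_aboveI[of _ "u 0"])
  have ga: "g m \<le> \<alpha>" for m unfolding \<alpha>_def using bdd by (simp add: cSup_upper)
  have au: "\<alpha> \<le> u m" for m unfolding \<alpha>_def using gle by (auto intro: cSup_least)
  show ?thesis
  proof (rule exI[of _ \<alpha>], intro conjI allI)
    show "A \<le> \<alpha>" using g0 ga[of 0] by simp
    show "\<alpha> \<le> B" using au[of 0] u0 by simp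
  next
    fix m
    have geq: "g m * e m = of_int \<lceil>(if m = 0 then A else g (m - 1)) * e m - a\<rceil> + a"
      using epos[of m] by (cases m) (simp_all add: g_def)
    show "\<exists>K::int. of_int K + a \<le> \<alpha> * e m \<and> \<alpha> * e m \<le> of_int K + a + L"
    proof (intro exI conjI)
      show "of_int \<lceil>(if m = 0 then A else g (m - 1)) * e m - a\<rceil> + a \<le> \<alpha> * e m"
        using geq[symmetric] ga[of m] epos[of m] by (simp add: mult_right_mono)
      have "\<alpha> * e m \<le> u m * e m" using au[of m] epos[of m] by (simp add: mult_right_mono)
      also have "u m * e m = g m * e m + L" using epos[of m] by (simp add: u_def field_simps)
      finally show "\<alpha> * e m \<le> of_int \<lceil>(if m = 0 then A else g (m - 1)) * e m - a\<rceil> + a + L"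
        using geq by simp
    qed
  qed
qed

lemma same_arc:
  fixes p s a b :: real and r :: nat
  assumes "0 \<le> p" "p < 1" "0 \<le> s" "s < 1" "s \<le> b" "b \<le> 1 - 1 / real r" "r > 0"
    and eq: "\<lfloor>real r * p\<rfloor> = \<lfloor>real r * frac (p + s)\<rfloor>"
  shows "frac (p + s) = p + s"
proof (rule ccontr)
  assume ne: "frac (p + s) \<noteq> p + s"
  have fp: "frac p = p" "frac s = s" using assms by (simp_all add: frac_eq)
  have "p + s \<ge> 1" using ne fp frac_add[of p s] by (auto split: if_splits)
  then have f1: "frac (p + s) = p + s - 1" using fp frac_add[of p s] by simp
  have "real r * b \<le> real r - 1" using assms(6,7)
    by (simp add: field_simps)
  then have "real r * s \<le> real r - 1" using assms(5) assms(7)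
    by (smt (verit) mult_left_mono of_nat_0_le_iff)
  moreover have "real r * frac (p + s) = real r * p + real r * s - real r" unfolding f1 by (simp add: algebra_simps)
  ultimately have "real r * frac (p + s) \<le> real r * p - 1" by linarith
  then have "\<lfloor>real r * frac (p + s)\<rfloor> \<le> \<lfloor>real r * p - 1\<rfloor>" by (rule floor_mono)
  also have "\<lfloor>real r * p - 1\<rfloor> = \<lfloor>real r * p\<rfloor> - 1" by simp
  finally show False using eq by simp
qed

lemma frac_add_frac: "frac (u + v) = frac (frac u + frac (v::real))"
  using frac_add[of u v] frac_add[of "frac u" "frac v"] by simp

lemma chain_bound:
  fixes \<alpha> a b :: real and r :: nat and D :: "nat set"
  assumes "r > 0" "a > 0" "b \<le> 1 - 1 / real r"
    and fr: "\<And>d. d \<in> D \<Longrightarrow> a \<le> frac (\<alpha> * real d) \<and> frac (\<alpha> * real d) \<le> b"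
    and ds: "diffseq D k x"
    and col: "\<forall>i<k. \<forall>j<k. nat \<lfloor>real r * frac (\<alpha> * real (x i))\<rfloor> + 1
                         = nat \<lfloor>real r * frac (\<alpha> * real (x j))\<rfloor> + 1"
  shows "i < k \<Longrightarrow> frac (\<alpha> * real (x 0)) + real i * a \<le> frac (\<alpha> * real (x i))"
proof (induction i)
  case 0
  then show ?case by simp
next
  case (Suc i)
  have lt: "i + 1 < k" using Suc.prems by simp
  define d where "d = x (i + 1) - x i"
  have dD: "d \<in> D" and gt: "x (i + 1) > x i" using ds lt by (auto simp: diffseq_def d_def)
  have xe: "real (x (i + 1)) = real (x i) + real d" using gt by (simp add: d_def)
  define p where "p = frac (\<alpha> * real (x i))"
  define s where "s = frac (\<alpha> * real d)"
  have fx: "frac (\<alpha> * real (x (i + 1))) = frac (p + s)"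
    unfolding xe p_def s_def distrib_left by (rule frac_add_frac)
  have ceq: "nat \<lfloor>real r * p\<rfloor> = nat \<lfloor>real r * frac (p + s)\<rfloor>"
    using col lt fx unfolding p_def by (metis Suc_eq_plus1 Suc_lessD add_right_cancel)
  have h: "0 \<le> \<lfloor>real r * p\<rfloor>" "0 \<le> \<lfloor>real r * frac (p + s)\<rfloor>"
    by (simp_all add: p_def)
  have feq: "\<lfloor>real r * p\<rfloor> = \<lfloor>real r * frac (p + s)\<rfloor>" using eq_nat_nat_iff[OF h] ceq by simp
  have sab: "a \<le> s" "s \<le> b" using fr[OF dD] by (simp_all add: s_def)
  have "frac (p + s) = p + s"
    by (rule same_arc[OF _ _ _ _ sab(2) assms(3) assms(1) feq]) (simp_all add: p_def s_def frac_lt_1)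
  then have "frac (\<alpha> * real (x (Suc i))) = p + s" using fx by simp
  moreover have "frac (\<alpha> * real (x 0)) + real i * a \<le> p" using Suc lt unfolding p_def by simp
  ultimately show ?case using sab by (simp add: algebra_simps)
qed

theorem theorem1:
  fixes r :: nat and D :: "nat set"
  assumes "r \<ge> 2"
    and "D \<subseteq> {1..}"
    and "infinite D"
    and "\<exists>\<delta>::real. \<delta> > 0 \<and> (\<exists>N::nat. N \<ge> 1 \<and>
           (\<forall>n\<ge>N. real (enumerate D n) \<ge>
              (2 + 1 / (real r - 1) + \<delta>) * real (enumerate D (n - 1))))"
  shows "\<not> r_accessible r D"
proof -
  obtain \<delta> :: real and N :: nat where dpos: "\<delta> > 0" and N1: "N \<ge> 1"
    and H: "\<And>n. n \<ge> N \<Longrightarrow> real (enumerate D n) \<ge>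
              (2 + 1 / (real r - 1) + \<delta>) * real (enumerate D (n - 1))"
    using assms(4) by blast
  define q where "q = 2 + 1 / (real r - 1) + \<delta>"
  define b where "b = (real r - 1) / real r"
  define dd where "dd = (\<lambda>n. real (enumerate D n))"
  have r1: "real r - 1 > 0" "real r > 0" using assms(1) by auto
  have dd1: "dd n \<ge> 1" for n
    using enumerate_in_set[OF assms(3), of n] assms(2) by (auto simp: dd_def)
  have ddmono: "m \<le> n \<Longrightarrow> dd m \<le> dd n" for m n
    using assms(3) by (simp add: dd_def)
  have Hq: "n \<ge> N \<Longrightarrow> dd n \<ge> q * dd (n - 1)" for n using H by (simp add: dd_def q_def)
  have "1 / (real r - 1) > 0" using r1 by simp
  then have qpos: "q > 2" unfolding q_def using dpos by linarith
  have b01: "0 < b" "b < 1" "b \<le> 1 - 1 / real r" using assms(1) r1 by (auto simp: b_def field_simps)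
  have qb: "q * b = 1 + b + \<delta> * b"
  proof -
    have "1 / (real r - 1) * b = 1 / real r" using r1 by (simp add: b_def)
    moreover have "1 + b = 2 * b + 1 / real r" using r1 by (simp add: b_def field_simps)
    ultimately show ?thesis by (simp add: q_def algebra_simps)
  qed
  define R where "R = dd (N - 1) / dd 0"
  have R1: "R \<ge> 1" using ddmono[of 0 "N - 1"] dd1[of 0] by (simp add: R_def)
  define a where "a = \<delta> * b / (q * R)"
  have apos: "a > 0" using dpos b01 qpos R1 by (simp add: a_def)
  have aR: "a * R = \<delta> * b / q" using R1 qpos by (simp add: a_def)
  have qaR: "q * (a * R) = \<delta> * b" using aR qpos by simp
  have "q * (b - a * R) = q * b - q * (a * R)" by (simp add: right_diff_distrib)
  then have key: "q * (b - a * R) = 1 + b" using qb qaR by linarith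
  have bpos: "b - a * R > 0"
  proof -
    have "q * (b - a * R) > 0" using key b01 by simp
    then show ?thesis using qpos by (simp add: zero_less_mult_iff)
  qed
  define L where "L = b - a"
  have aaR: "a \<le> a * R" using apos R1 by simp
  have qL: "1 + L \<le> L * q"
  proof -
    have "q * (b - a) \<ge> q * (b - a * R)" using aaR qpos by (simp add: mult_left_mono)
    then have h1: "q * (b - a) \<ge> 1 + b" using key by linarith
    have "L * q = q * (b - a)" by (simp add: L_def mult.commute)
    then show ?thesis using h1 apos unfolding L_def by linarith
  qed
  have Lpos: "L \<ge> 0" using qL qpos by (smt (verit) mult_le_cancel_left1)
  define e where "e = (\<lambda>m. dd (N + m))"
  define A where "A = a / dd 0"
  define B where "B = b / dd (N - 1)"
  have epos: "e m > 0" for m using dd1[of "N + m"] by (simp add: e_def)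
  have egrow: "(1 + L) * e m \<le> L * e (Suc m)" for m
  proof -
    have "e (Suc m) \<ge> q * e m" using Hq[of "N + Suc m"] by (simp add: e_def)
    then have "L * e (Suc m) \<ge> L * (q * e m)" using Lpos by (simp add: mult_left_mono)
    moreover have "(1 + L) * e m \<le> (L * q) * e m" using qL epos[of m] by (simp add: mult_right_mono)
    ultimately show ?thesis by (simp add: algebra_simps)
  qed
  have base: "1 + L \<le> e 0 * (B - A)"
  proof -
    have BA: "B - A = (b - a * R) / dd (N - 1)"
      using dd1[of 0] dd1[of "N - 1"] by (simp add: A_def B_def R_def field_simps)
    have BA0: "B - A \<ge> 0" using BA bpos dd1[of "N - 1"] by simp
    have "e 0 \<ge> q * dd (N - 1)" using Hq[of N] by (simp add: e_def)
    then have "e 0 * (B - A) \<ge> q * dd (N - 1) * (B - A)" using BA0 by (simp add: mult_right_mono)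
    moreover have "q * dd (N - 1) * (B - A) = q * (b - a * R)"
      using BA dd1[of "N - 1"] by simp
    ultimately show ?thesis using key apos by (simp add: L_def)
  qed
  obtain \<alpha> where aA: "A \<le> \<alpha>" and aB: "\<alpha> \<le> B"
    and aK: "\<And>m. \<exists>K::int. of_int K + a \<le> \<alpha> * e m \<and> \<alpha> * e m \<le> of_int K + a + L"
    using nested[OF epos egrow Lpos base, of a] by blast
  have fr: "a \<le> frac (\<alpha> * real d) \<and> frac (\<alpha> * real d) \<le> b" if dD: "d \<in> D" for d
  proof -
    obtain n where n: "enumerate D n = d" using enumerate_Ex[OF assms(3) dD] by blast
    have dn: "real d = dd n" using n by (simp add: dd_def)
    show ?thesis
    proof (cases "n < N")
      case True
      have "\<alpha> * dd n \<ge> A * dd n" using aA dd1[of n] by (simp add: mult_right_mono)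
      moreover have "A * dd n \<ge> a" using ddmono[of 0 n] dd1[of 0] apos
        by (simp add: A_def field_simps mult_left_mono)
      moreover have "\<alpha> * dd n \<le> B * dd n" using aB dd1[of n] by (simp add: mult_right_mono)
      moreover have "B * dd n \<le> b" using ddmono[of n "N - 1"] True dd1[of "N - 1"] b01
        by (simp add: B_def field_simps mult_left_mono)
      ultimately have "a \<le> \<alpha> * dd n" "\<alpha> * dd n \<le> b" by linarith+
      moreover then have "frac (\<alpha> * dd n) = \<alpha> * dd n" using apos b01 by (simp add: frac_eq)
      ultimately show ?thesis by (simp add: dn)
    next
      case False
      then obtain m where m: "n = N + m" by (metis le_add_diff_inverse not_less)
      obtain K :: int where K: "of_int K + a \<le> \<alpha> * e m" "\<alpha> * e m \<le> of_int K + a + L"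
        using aK[of m] by blast
      have em: "e m = dd n" by (simp add: e_def m)
      have "frac (\<alpha> * dd n) = \<alpha> * dd n - of_int K"
        unfolding frac_unique_iff using K em apos b01 by (simp add: L_def)
      then show ?thesis using K em by (simp add: dn L_def)
    qed
  qed
  define chi where "chi = (\<lambda>y::nat. nat \<lfloor>real r * frac (\<alpha> * real y)\<rfloor> + 1)"
  have col: "r_coloring r chi"
    unfolding r_coloring_def
  proof (intro allI impI)
    fix y :: nat
    have "real r * frac (\<alpha> * real y) < real r * 1" using r1 frac_lt_1 by (intro mult_strict_left_mono) auto
    then have "\<lfloor>real r * frac (\<alpha> * real y)\<rfloor> < int r" by (simp add: floor_less_iff)
    moreover have "0 \<le> \<lfloor>real r * frac (\<alpha> * real y)\<rfloor>" by simp
    ultimately have "nat \<lfloor>real r * frac (\<alpha> * real y)\<rfloor> < r" by (simp add: nat_less_iff)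
    then show "chi y \<in> {1..r}" by (auto simp: chi_def)
  qed
  define k where "k = nat \<lceil>1 / a\<rceil> + 1"
  have nok: "\<not> (\<exists>x. diffseq D k x \<and> (\<forall>i<k. \<forall>j<k. chi (x i) = chi (x j)))"
  proof
    assume "\<exists>x. diffseq D k x \<and> (\<forall>i<k. \<forall>j<k. chi (x i) = chi (x j))"
    then obtain x where ds: "diffseq D k x" and cc: "\<forall>i<k. \<forall>j<k. chi (x i) = chi (x j)" by blast
    have "frac (\<alpha> * real (x 0)) + real (k - 1) * a \<le> frac (\<alpha> * real (x (k - 1)))"
    proof (rule chain_bound[OF _ apos b01(3) fr ds])
      show "0 < r" using r1 by simp
      show "k - 1 < k" by (simp add: k_def)
      show "\<forall>i<k. \<forall>j<k. nat \<lfloor>real r * frac (\<alpha> * real (x i))\<rfloor> + 1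
                         = nat \<lfloor>real r * frac (\<alpha> * real (x j))\<rfloor> + 1"
        using cc unfolding chi_def .
    qed
    moreover have "real (k - 1) * a \<ge> 1"
    proof -
      have "k - 1 = nat \<lceil>1 / a\<rceil>" by (simp add: k_def)
      then have "real (k - 1) \<ge> 1 / a" using real_nat_ceiling_ge[of "1 / a"] by simp
      then show ?thesis unfolding pos_divide_le_eq[OF apos] .
    qed
    moreover have "frac (\<alpha> * real (x (k - 1))) < 1" by (rule frac_lt_1)
    moreover have "frac (\<alpha> * real (x 0)) \<ge> 0" by simp
    ultimately show False by linarith
  qed
  show ?thesis
    unfolding r_accessible_def
  proof
    assume "\<forall>chi. r_coloring r chi \<longrightarrow> (\<forall>k\<ge>1. \<exists>x. diffseq D k x \<and> (\<forall>i<k. \<forall>j<k. chi (x i) = chi (x j)))"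
    then have "\<exists>x. diffseq D k x \<and> (\<forall>i<k. \<forall>j<k. chi (x i) = chi (x j))"
      using col by (simp add: k_def)
    then show False using nok by blast
  qed
qed

end
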